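(* Suppose that $2^\mu=\mu^+$ for every limit cardinal $\mu$ and that there are no Mahlo cardinals. Then for every set $A$ of regular cardinals, $\operatorname{spec}(A)\subseteq\operatorname{pcf}(A)\cup\lim(A)$. Consequently, if $2^\mu=\mu^+$ for every singular cardinal $\mu$ and there are no regular limit cardinals, then $\operatorname{spec}(A)=\operatorname{pcf}(A)$ for every set $A$ of regular cardinals.
   Context: For a set $A$ of regular cardinals, $\prod A$ is the set of functions $f$ with domain $A$ and $f(a)\in a$, ordered by pointwise domination ($f<g$ iff $f(a)<g(a)$ for all $a$). $\operatorname{spec}(A)$ is the set of regular cardinals $\kappa$ with $(\prod A,<)\geq_T\kappa$ in the Tukey order; equivalently, regular $\kappa$ such that there is $\mathcal{F}\subseteq\prod A$ of size $\kappa$ every $\kappa$-sized subset of which is unbounded in $(\prod A,<)$. $\operatorname{pcf}(A)=\{\operatorname{cf}(\prod A/D): D\text{ an ultrafilter on }A\}$, where $\prod A/D$ is ordered by $f<_Dg$ iff $\{a:f(a)<g(a)\}\in D$. $\lim(A)$ denotes the set of limit points of $A$ (ordinals $\delta$ with $A\cap\delta$ unbounded in $\delta$). *)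

theory Defs
  imports Main "HOL-Library.FuncSet"
begin

text \<open>Ordinals are modelled as elements of a well-ordered type 'k; the ordinal x is
identified with its initial segment seg x = {y. y < x}.\<close>

definition seg :: "'k::wellorder \<Rightarrow> 'k set" where
  "seg x = {y. y < x}"

definition is_cardinal :: "'k::wellorder \<Rightarrow> bool" where
  "is_cardinal x \<longleftrightarrow> (\<forall>y<x. \<not> ordIso2 (card_of (seg y)) (card_of (seg x)))"

definition infinite_cardinal :: "'k::wellorder \<Rightarrow> bool" where
  "infinite_cardinal x \<longleftrightarrow> is_cardinal x \<and> infinite (seg x)"

definition unbounded_in :: "'k::wellorder set \<Rightarrow> 'k \<Rightarrow> bool" where
  "unbounded_in S x \<longleftrightarrow> S \<subseteq> seg x \<and> (\<forall>y<x. \<exists>s\<in>S. y \<le> s)"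

definition regular :: "'k::wellorder \<Rightarrow> bool" where
  "regular x \<longleftrightarrow> infinite_cardinal x \<and>
     (\<forall>S. unbounded_in S x \<longrightarrow> ordIso2 (card_of S) (card_of (seg x)))"

definition singular :: "'k::wellorder \<Rightarrow> bool" where
  "singular x \<longleftrightarrow> infinite_cardinal x \<and> \<not> regular x"

definition successor_cardinal :: "'k::wellorder \<Rightarrow> bool" where
  "successor_cardinal x \<longleftrightarrow> is_cardinal x \<and>
     (\<exists>l<x. infinite_cardinal l \<and> ordIso2 (card_of (seg x)) (cardSuc (card_of (seg l))))"

definition limit_cardinal :: "'k::wellorder \<Rightarrow> bool" where
  "limit_cardinal x \<longleftrightarrow> infinite_cardinal x \<and>
     \<not> ordLeq2 (card_of (seg x)) (card_of (UNIV :: nat set)) \<and> \<not> successor_cardinal x"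

definition limit_point :: "'k::wellorder set \<Rightarrow> 'k \<Rightarrow> bool" where
  "limit_point S d \<longleftrightarrow> (\<exists>a\<in>S. a < d) \<and> (\<forall>y<d. \<exists>a\<in>S. y < a \<and> a < d)"

definition lim_pts :: "'k::wellorder set \<Rightarrow> 'k set" where
  "lim_pts S = {d. limit_point S d}"

definition club :: "'k::wellorder set \<Rightarrow> 'k \<Rightarrow> bool" where
  "club C x \<longleftrightarrow> C \<subseteq> seg x \<and> (\<forall>y<x. \<exists>c\<in>C. y < c) \<and>
     (\<forall>d<x. limit_point C d \<longrightarrow> d \<in> C)"

definition stationary :: "'k::wellorder set \<Rightarrow> 'k \<Rightarrow> bool" where
  "stationary S x \<longleftrightarrow> S \<subseteq> seg x \<and> (\<forall>C. club C x \<longrightarrow> S \<inter> C \<noteq> {})"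

definition mahlo :: "'k::wellorder \<Rightarrow> bool" where
  "mahlo x \<longleftrightarrow> regular x \<and> limit_cardinal x \<and> stationary {l. l < x \<and> regular l} x"

definition prodA :: "'k::wellorder set \<Rightarrow> ('k \<Rightarrow> 'k) set" where
  "prodA A = PiE A seg"

definition bounded_in_prod :: "'k::wellorder set \<Rightarrow> ('k \<Rightarrow> 'k) set \<Rightarrow> bool" where
  "bounded_in_prod A G \<longleftrightarrow> (\<exists>h\<in>prodA A. \<forall>g\<in>G. \<forall>a\<in>A. g a < h a)"

definition spec :: "'k::wellorder set \<Rightarrow> 'k set" where
  "spec A = {\<kappa>. regular \<kappa> \<and>
     (\<exists>F. F \<subseteq> prodA A \<and> ordIso2 (card_of F) (card_of (seg \<kappa>)) \<and>
        (\<forall>G. G \<subseteq> F \<and> ordIso2 (card_of G) (card_of (seg \<kappa>)) \<longrightarrow> \<not> bounded_in_prod A G))}"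

definition ultrafilter_on :: "'a set set \<Rightarrow> 'a set \<Rightarrow> bool" where
  "ultrafilter_on D A \<longleftrightarrow> D \<subseteq> Pow A \<and> A \<in> D \<and> {} \<notin> D \<and>
     (\<forall>X\<in>D. \<forall>Y\<in>D. X \<inter> Y \<in> D) \<and>
     (\<forall>X\<in>D. \<forall>Y. X \<subseteq> Y \<and> Y \<subseteq> A \<longrightarrow> Y \<in> D) \<and>
     (\<forall>X. X \<subseteq> A \<longrightarrow> X \<in> D \<or> A - X \<in> D)"

definition cofinal_mod :: "'k::wellorder set set \<Rightarrow> 'k set \<Rightarrow> ('k \<Rightarrow> 'k) set \<Rightarrow> bool" where
  "cofinal_mod D A C \<longleftrightarrow> C \<subseteq> prodA A \<and> (\<forall>f\<in>prodA A. \<exists>g\<in>C. {a\<in>A. f a < g a} \<in> D)"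

definition pcf :: "'k::wellorder set \<Rightarrow> 'k set" where
  "pcf A = {\<kappa>. is_cardinal \<kappa> \<and> (\<exists>D. ultrafilter_on D A \<and>
     (\<exists>C. cofinal_mod D A C \<and> ordIso2 (card_of C) (card_of (seg \<kappa>))) \<and>
     (\<forall>C. cofinal_mod D A C \<longrightarrow> ordLeq2 (card_of (seg \<kappa>)) (card_of C)))}"

definition two_pow_is_succ :: "'k::wellorder \<Rightarrow> bool" where
  "two_pow_is_succ \<mu> \<longleftrightarrow> ordIso2 (card_of (Pow (seg \<mu>))) (cardSuc (card_of (seg \<mu>)))"

end

theory Submission
  imports Defs
begin

unbundle cardinal_syntax

lemma seg_mono: "(x::'k::wellorder) \<le> y \<Longrightarrow> |seg x| \<le>o |seg y|"
  by (rule card_of_mono1) (auto simp: seg_def)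

lemma seg_less: "is_cardinal (y::'k::wellorder) \<Longrightarrow> x < y \<Longrightarrow> |seg x| <o |seg y|"
  unfolding is_cardinal_def using seg_mono[of x y] ordLeq_iff_ordLess_or_ordIso by force

lemma infcard_lim:
  assumes "infinite_cardinal (a::'k::wellorder)" "x < a"
  shows "\<exists>z. x < z \<and> z < a"
proof (rule ccontr)
  assume "\<not> ?thesis"
  hence e: "seg a = insert x (seg x)" using assms(2) by (auto simp: seg_def) (meson linorder_neqE)
  have "infinite (seg x)" using assms(1) e unfolding infinite_cardinal_def by auto
  hence "|{x} \<union> seg x| \<le>o |seg x|"
    by (intro card_of_Un_ordLeq_infinite_Field) (auto simp: Field_card_of card_of_card_order_on ordLeq_refl card_of_Well_order intro!: card_of_singl_ordLeq)
  hence "|seg a| \<le>o |seg x|" using e by simp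
  moreover have "|seg x| \<le>o |seg a|" using seg_mono[of x a] assms(2) by simp
  ultimately have "|seg x| =o |seg a|" using ordIso_iff_ordLeq by blast
  thus False using assms unfolding infinite_cardinal_def is_cardinal_def by blast
qed

definition sc :: "'k::wellorder \<Rightarrow> 'k" where "sc x = (LEAST z. x < z)"

lemma sc_props:
  assumes "infinite_cardinal (a::'k::wellorder)" "x < a"
  shows "x < sc x" "sc x < a"
proof -
  obtain z where z: "x < z" "z < a" using infcard_lim[OF assms] by blast
  show "x < sc x" unfolding sc_def by (rule LeastI[of _ z]) (rule z(1))
  have "sc x \<le> z" unfolding sc_def by (rule Least_le) (rule z(1))
  thus "sc x < a" using z by simp
qed

definition z0 :: "'k::wellorder" where "z0 = (LEAST x. True)"

lemma z0_le: "z0 \<le> x" unfolding z0_def by (rule Least_le) simp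

lemma z0_less: "infinite_cardinal (a::'k::wellorder) \<Longrightarrow> z0 < a"
proof -
  assume "infinite_cardinal a"
  hence "seg a \<noteq> {}" unfolding infinite_cardinal_def by auto
  then obtain y where "y < a" by (auto simp: seg_def)
  thus "z0 < a" using z0_le[of y] by simp
qed

lemma reg_bounded:
  assumes "regular (a::'k::wellorder)" "S \<subseteq> seg a" "|S| <o |seg a|"
  shows "\<exists>t<a. \<forall>s\<in>S. s < t"
proof (rule ccontr)
  assume "\<not> ?thesis"
  hence "unbounded_in S a" using assms(2) unfolding unbounded_in_def by (meson leI order.strict_trans2)
  hence "|S| =o |seg a|" using assms(1) unfolding regular_def by blast
  thus False using assms(3) not_ordLess_ordIso by blast
qed

lemma regular_card: "regular a \<Longrightarrow> is_cardinal a"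
  unfolding regular_def infinite_cardinal_def by (elim conjE)

lemma regular_seg_inf: "regular a \<Longrightarrow> infinite (seg a)"
  unfolding regular_def infinite_cardinal_def by (elim conjE)

lemma regular_inf: "regular a \<Longrightarrow> infinite_cardinal a" unfolding regular_def by blast

lemma PH_union:
  fixes \<kappa> :: "'k::wellorder" and F :: "'i \<Rightarrow> 'b set"
  assumes reg: "regular \<kappa>" and I: "|I| <o |seg \<kappa>|" and F: "\<forall>i\<in>I. |F i| <o |seg \<kappa>|"
  shows "|\<Union>i\<in>I. F i| <o |seg \<kappa>|"
proof (rule ccontr)
  assume "\<not> ?thesis"
  hence le: "|seg \<kappa>| \<le>o |\<Union>i\<in>I. F i|" using not_ordLess_iff_ordLeq[OF card_of_Well_order card_of_Well_order] by blast
  have ne: "seg \<kappa> \<noteq> {}" using reg unfolding regular_def infinite_cardinal_def by auto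
  obtain f where f: "f ` (\<Union>i\<in>I. F i) = seg \<kappa>" using iffD2[OF card_of_ordLeq2[OF ne] le] by blast
  have "\<forall>i\<in>I. \<exists>t<\<kappa>. \<forall>s\<in>f ` F i. s < t"
  proof
    fix i assume i: "i \<in> I"
    have "|f ` F i| <o |seg \<kappa>|" using ordLeq_ordLess_trans[OF card_of_image[of f "F i"]] F i by blast
    moreover have "f ` F i \<subseteq> seg \<kappa>" using f i by blast
    ultimately show "\<exists>t<\<kappa>. \<forall>s\<in>f ` F i. s < t" using reg_bounded[OF reg] by blast
  qed
  then obtain g where g: "\<forall>i\<in>I. g i < \<kappa> \<and> (\<forall>s\<in>f ` F i. s < g i)" by metis
  have "unbounded_in (g ` I) \<kappa>"
    unfolding unbounded_in_def
  proof
    show "g ` I \<subseteq> seg \<kappa>" using g by (auto simp: seg_def)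
    show "\<forall>y<\<kappa>. \<exists>s\<in>g ` I. y \<le> s"
    proof (intro allI impI)
      fix y assume "y < \<kappa>"
      hence "y \<in> f ` (\<Union>i\<in>I. F i)" using f by (auto simp: seg_def)
      then obtain i u where "i \<in> I" "u \<in> F i" "y = f u" by blast
      thus "\<exists>s\<in>g ` I. y \<le> s" using g by force
    qed
  qed
  hence "|g ` I| =o |seg \<kappa>|" using reg unfolding regular_def by blast
  moreover have "|g ` I| <o |seg \<kappa>|" using ordLeq_ordLess_trans[OF card_of_image[of g I] I] .
  ultimately show False using not_ordLess_ordIso by blast
qed

lemma PH_fiber:
  fixes \<kappa> :: "'k::wellorder"
  assumes reg: "regular \<kappa>" and G: "|G| =o |seg \<kappa>|" and S: "|S| <o |seg \<kappa>|"
    and phi: "\<forall>g\<in>G. \<phi> g \<in> S"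
  shows "\<exists>s\<in>S. |{g\<in>G. \<phi> g = s}| =o |seg \<kappa>|"
proof (rule ccontr)
  assume nt: "\<not> ?thesis"
  have "\<forall>s\<in>S. |{g\<in>G. \<phi> g = s}| <o |seg \<kappa>|"
  proof
    fix s assume "s \<in> S"
    have "|{g\<in>G. \<phi> g = s}| \<le>o |seg \<kappa>|"
      using ordLeq_ordIso_trans[OF card_of_mono1[of "{g\<in>G. \<phi> g = s}" G] G] by blast
    thus "|{g\<in>G. \<phi> g = s}| <o |seg \<kappa>|" using nt \<open>s \<in> S\<close> ordLeq_iff_ordLess_or_ordIso[of "|{g\<in>G. \<phi> g = s}|" "|seg \<kappa>|"] by blast
  qed
  hence "|\<Union>s\<in>S. {g\<in>G. \<phi> g = s}| <o |seg \<kappa>|" using PH_union[OF reg S, of "\<lambda>s. {g\<in>G. \<phi> g = s}"] by blast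
  moreover have "(\<Union>s\<in>S. {g\<in>G. \<phi> g = s}) = G" using phi by auto
  ultimately show False using G not_ordLess_ordIso by metis
qed

lemma prodA_restrict: "(\<forall>a\<in>A. h a < a) \<Longrightarrow> restrict h A \<in> prodA A"
  unfolding prodA_def by (auto simp: seg_def)

lemma prodA_lt: "g \<in> prodA A \<Longrightarrow> a \<in> A \<Longrightarrow> g a < a"
  unfolding prodA_def by (auto simp: seg_def)

lemma lp_card:
  fixes A :: "'k::wellorder set"
  assumes reg: "\<forall>a\<in>A. regular a" and lp: "limit_point A d"
  shows "limit_cardinal d" "infinite_cardinal d"
proof -
  have lp2: "\<forall>y<d. \<exists>a\<in>A. y < a \<and> a < d" using lp unfolding limit_point_def by blast
  have two: "\<exists>a1\<in>A. \<exists>a2\<in>A. y < a1 \<and> a1 < a2 \<and> a2 < d" if yd: "y < d" for y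
  proof -
    obtain a1 where a1: "a1 \<in> A" "y < a1" "a1 < d" using lp2 yd by blast
    obtain a2 where a2: "a2 \<in> A" "a1 < a2" "a2 < d" using lp2 a1(3) by blast
    show ?thesis using a1 a2 by blast
  qed
  obtain a0 where a0: "a0 \<in> A" "a0 < d" using lp unfolding limit_point_def by blast
  have cardd: "is_cardinal d" unfolding is_cardinal_def
  proof (intro allI impI)
    fix y assume "y < d"
    then obtain a1 a2 where a: "a1 \<in> A" "a2 \<in> A" "y < a1" "a1 < a2" "a2 < d" using two by blast
    have "|seg y| \<le>o |seg a1|" using seg_mono a less_imp_le by blast
    also have "|seg a1| <o |seg a2|" using seg_less[of a2 a1] regular_card reg a by blast
    also have "|seg a2| \<le>o |seg d|" using seg_mono a less_imp_le by blast
    finally show "\<not> |seg y| =o |seg d|" using not_ordLess_ordIso by blast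
  qed
  have infd: "infinite (seg d)"
  proof -
    have "infinite (seg a0)" using reg a0 regular_seg_inf by blast
    moreover have "seg a0 \<subseteq> seg d" using a0 by (auto simp: seg_def)
    ultimately show ?thesis using finite_subset by blast
  qed
  show "infinite_cardinal d" using cardd infd unfolding infinite_cardinal_def by blast
  moreover have "\<not> |seg d| \<le>o |UNIV :: nat set|"
  proof -
    obtain a1 a2 where a: "a1 \<in> A" "a2 \<in> A" "a0 < a1" "a1 < a2" "a2 < d" using two a0 by blast
    have "|UNIV :: nat set| \<le>o |seg a1|" using reg a infinite_iff_card_of_nat regular_seg_inf by blast
    also have "|seg a1| <o |seg a2|" using seg_less[of a2 a1] regular_card reg a by blast
    also have "|seg a2| \<le>o |seg d|" using seg_mono a less_imp_le by blast
    finally show ?thesis using not_ordLess_ordLeq by blast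
  qed
  moreover have "\<not> successor_cardinal d"
  proof
    assume "successor_cardinal d"
    then obtain l where l: "l < d" "|seg d| =o cardSuc |seg l|"
      unfolding successor_cardinal_def by blast
    obtain a1 a2 where a: "a1 \<in> A" "a2 \<in> A" "l < a1" "a1 < a2" "a2 < d" using two l by blast
    have "|seg l| <o |seg a1|" using seg_less[of a1 l] regular_card reg a by blast
    hence "cardSuc |seg l| \<le>o |seg a1|" using cardSuc_ordLess_ordLeq card_of_Card_order by blast
    also have "|seg a1| <o |seg a2|" using seg_less[of a2 a1] regular_card reg a by blast
    also have "|seg a2| \<le>o |seg d|" using seg_mono a less_imp_le by blast
    also have "|seg d| =o cardSuc |seg l|" by (rule l(2))
    finally show False using ordLess_irreflexive by blast
  qed
  ultimately show "limit_cardinal d" unfolding limit_cardinal_def by blast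
qed

lemma prodA_ne: "\<forall>a\<in>A. regular a \<Longrightarrow> restrict (\<lambda>a. z0) A \<in> prodA A"
  by (rule prodA_restrict) (auto intro: z0_less regular_inf)

lemma extract_lim:
  fixes \<kappa> :: "'k::wellorder" and F :: "('k \<Rightarrow> 'k) set"
  assumes regA: "\<forall>a\<in>A. regular a" and regk: "regular \<kappa>" and kA: "\<kappa> \<notin> A"
    and klim: "\<not> limit_point A \<kappa>"
    and FA: "F \<subseteq> prodA A" and Fk: "|F| =o |seg \<kappa>|"
    and unb: "\<forall>G. G \<subseteq> F \<and> |G| =o |seg \<kappa>| \<longrightarrow> \<not> bounded_in_prod A G"
  shows "\<exists>l. l < \<kappa> \<and> limit_point A l \<and> |seg \<kappa>| \<le>o |Pow (seg l \<times> seg l)|"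
proof -
  define bnd where "bnd \<delta> G \<longleftrightarrow> (\<exists>h\<in>prodA A. \<forall>g\<in>G. \<forall>a\<in>A. a < \<delta> \<longrightarrow> g a < h a)" for \<delta> G
  define good where "good \<delta> \<longleftrightarrow> (\<forall>G. G \<subseteq> F \<and> |G| =o |seg \<kappa>| \<longrightarrow> \<not> bnd \<delta> G)" for \<delta>
  have pne: "restrict (\<lambda>a. z0) A \<in> prodA A" using prodA_ne regA by blast
  have goodk: "good \<kappa>" unfolding good_def
  proof (intro allI impI notI)
    fix G assume G: "G \<subseteq> F \<and> |G| =o |seg \<kappa>|" and "bnd \<kappa> G"
    then obtain h where h: "h \<in> prodA A" "\<forall>g\<in>G. \<forall>a\<in>A. a < \<kappa> \<longrightarrow> g a < h a"
      unfolding bnd_def by blast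
    have "\<forall>a\<in>A. \<exists>t. \<not> a < \<kappa> \<longrightarrow> t < a \<and> (\<forall>s\<in>(\<lambda>g. g a) ` G. s < t)"
    proof
      fix a assume aA: "a \<in> A"
      show "\<exists>t. \<not> a < \<kappa> \<longrightarrow> t < a \<and> (\<forall>s\<in>(\<lambda>g. g a) ` G. s < t)"
      proof (cases "a < \<kappa>")
        case False
        hence ka: "\<kappa> < a" using kA aA by (metis linorder_neqE)
        have sub: "(\<lambda>g. g a) ` G \<subseteq> seg a" using G FA aA prodA_lt by (force simp: seg_def)
        have "|(\<lambda>g. g a) ` G| \<le>o |G|" by (rule card_of_image)
        also have "|G| =o |seg \<kappa>|" using G by blast
        also have "|seg \<kappa>| <o |seg a|" using seg_less[OF regular_card ka] regA aA by blast
        finally have "|(\<lambda>g. g a) ` G| <o |seg a|" .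
        then obtain t where "t < a" "\<forall>s\<in>(\<lambda>g. g a) ` G. s < t"
          using reg_bounded[OF _ sub] regA aA by blast
        thus ?thesis by blast
      qed simp
    qed
    from bchoice[OF this] obtain t where t: "\<forall>a\<in>A. \<not> a < \<kappa> \<longrightarrow> t a < a \<and> (\<forall>s\<in>(\<lambda>g. g a) ` G. s < t a)"
      by blast
    define h' where "h' = restrict (\<lambda>a. if a < \<kappa> then h a else t a) A"
    have "h' \<in> prodA A" unfolding h'_def
      by (rule prodA_restrict) (use h t prodA_lt in auto)
    moreover have "\<forall>g\<in>G. \<forall>a\<in>A. g a < h' a" unfolding h'_def using h t by auto
    ultimately have "bounded_in_prod A G" unfolding bounded_in_prod_def by blast
    thus False using unb G by blast
  qed
  define l where "l = (LEAST \<delta>. good \<delta>)"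
  have gl: "good l" unfolding l_def by (rule LeastI[of good \<kappa>]) (rule goodk)
  have lk: "l \<le> \<kappa>" unfolding l_def by (rule Least_le) (rule goodk)
  have notgood: "\<not> good y" if "y < l" for y using not_less_Least[of y good] that unfolding l_def by blast
  have lp: "limit_point A l" unfolding limit_point_def
  proof
    show "\<exists>a\<in>A. a < l"
    proof (rule ccontr)
      assume "\<not> (\<exists>a\<in>A. a < l)"
      hence "bnd l F" unfolding bnd_def using pne by blast
      thus False using gl Fk unfolding good_def by blast
    qed
    show "\<forall>y<l. \<exists>a\<in>A. y < a \<and> a < l"
    proof (intro allI impI)
      fix y assume yl: "y < l"
      show "\<exists>a\<in>A. y < a \<and> a < l"
      proof (rule ccontr)
        assume na: "\<not> (\<exists>a\<in>A. y < a \<and> a < l)"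
        obtain G where G: "G \<subseteq> F" "|G| =o |seg \<kappa>|" "bnd y G"
          using notgood[OF yl] unfolding good_def by blast
        then obtain h where h: "h \<in> prodA A" "\<forall>g\<in>G. \<forall>a\<in>A. a < y \<longrightarrow> g a < h a"
          unfolding bnd_def by blast
        show False
        proof (cases "y \<in> A")
          case False
          have "bnd l G" unfolding bnd_def
          proof (intro bexI[OF _ h(1)] ballI impI)
            fix g a assume "g \<in> G" "a \<in> A" "a < l"
            hence "a < y" using na False by (metis linorder_neqE)
            thus "g a < h a" using h \<open>g \<in> G\<close> \<open>a \<in> A\<close> by blast
          qed
          thus False using gl G unfolding good_def by blast
        next
          case True
          have yk: "y < \<kappa>" using yl lk by simp
          have yinf: "infinite_cardinal y" using regA True regular_inf by blast
          have Sy: "|seg y| <o |seg \<kappa>|" using seg_less[OF regular_card[OF regk] yk] .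
          have phi: "\<forall>g\<in>G. g y \<in> seg y" using G(1) FA True prodA_lt by (force simp: seg_def)
          obtain v where v: "v \<in> seg y" "|{g\<in>G. g y = v}| =o |seg \<kappa>|"
            using PH_fiber[OF regk G(2) Sy phi] by blast
          define h' where "h' = restrict (\<lambda>a. if a = y then sc v else h a) A"
          have "h' \<in> prodA A" unfolding h'_def
            by (rule prodA_restrict) (use h prodA_lt sc_props(2)[OF yinf] v(1) in \<open>auto simp: seg_def\<close>)
          moreover have "\<forall>g\<in>{g\<in>G. g y = v}. \<forall>a\<in>A. a < l \<longrightarrow> g a < h' a"
          proof (intro ballI impI)
            fix g a assume g: "g \<in> {g\<in>G. g y = v}" and a: "a \<in> A" "a < l"
            show "g a < h' a"
            proof (cases "a = y")
              case True
              thus ?thesis using g a sc_props(1)[OF yinf] v(1) unfolding h'_def by (auto simp: seg_def)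
            next
              case False
              hence "a < y" using na a by (metis linorder_neqE)
              thus ?thesis using g a h False unfolding h'_def by auto
            qed
          qed
          ultimately have "bnd l {g\<in>G. g y = v}" unfolding bnd_def by blast
          moreover have "{g\<in>G. g y = v} \<subseteq> F" using G by blast
          ultimately show False using gl v(2) unfolding good_def by blast
        qed
      qed
    qed
  qed
  have "l \<noteq> \<kappa>" using lp klim by blast
  hence lk2: "l < \<kappa>" using lk by simp
  define R where "R = (\<lambda>g. restrict g (A \<inter> seg l)) ` F"
  have "\<not> |R| <o |seg \<kappa>|"
  proof
    assume Rs: "|R| <o |seg \<kappa>|"
    have phi: "\<forall>g\<in>F. restrict g (A \<inter> seg l) \<in> R" unfolding R_def by blast
    obtain r where r: "r \<in> R" "|{g\<in>F. restrict g (A \<inter> seg l) = r}| =o |seg \<kappa>|"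
      using PH_fiber[OF regk Fk Rs phi] by blast
    obtain g0 where g0: "g0 \<in> F" "r = restrict g0 (A \<inter> seg l)" using r(1) unfolding R_def by blast
    define h where "h = restrict (\<lambda>a. if a < l then sc (r a) else z0) A"
    have hP: "h \<in> prodA A" unfolding h_def
    proof (rule prodA_restrict, intro ballI)
      fix a assume a: "a \<in> A"
      have ai: "infinite_cardinal a" using regA a regular_inf by blast
      show "(if a < l then sc (r a) else z0) < a"
      proof (cases "a < l")
        case True
        hence "r a = g0 a" using g0 a by (simp add: seg_def)
        moreover have "g0 a < a" using g0 FA a prodA_lt by blast
        ultimately show ?thesis using True sc_props(2)[OF ai] by simp
      qed (use z0_less[OF ai] in simp)
    qed
    define Fr where "Fr = {g\<in>F. restrict g (A \<inter> seg l) = r}"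
    have hb: "\<forall>g\<in>{g\<in>F. restrict g (A \<inter> seg l) = r}. \<forall>a\<in>A. a < l \<longrightarrow> g a < h a"
    proof (intro ballI impI)
      fix g a assume g: "g \<in> {g\<in>F. restrict g (A \<inter> seg l) = r}" and a: "a \<in> A" "a < l"
      have ai: "infinite_cardinal a" using regA a regular_inf by blast
      have ra: "r a = g a" using g a by (auto simp: seg_def)
      have "g a < a" using g FA a prodA_lt by blast
      hence "g a < sc (g a)" by (rule sc_props(1)[OF ai])
      moreover have "h a = sc (r a)" unfolding h_def using a by simp
      ultimately show "g a < h a" using ra by simp
    qed
    have "bnd l Fr" unfolding bnd_def Fr_def using hb hP by (rule bexI)
    moreover have "Fr \<subseteq> F" unfolding Fr_def by blast
    moreover have "|Fr| =o |seg \<kappa>|" unfolding Fr_def by (rule r(2))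
    ultimately show False using gl unfolding good_def by blast
  qed
  hence kR: "|seg \<kappa>| \<le>o |R|" using not_ordLess_iff_ordLeq[OF card_of_Well_order card_of_Well_order] by blast
  have "|R| \<le>o |Pow (seg l \<times> seg l)|"
  proof -
    define gr where "gr r = {(a, r a) | a. a \<in> A \<inter> seg l}" for r :: "'k \<Rightarrow> 'k"
    have "inj_on gr R"
    proof (rule inj_onI)
      fix r1 r2 assume r1: "r1 \<in> R" and r2: "r2 \<in> R" and e: "gr r1 = gr r2"
      show "r1 = r2"
      proof
        fix a
        show "r1 a = r2 a"
        proof (cases "a \<in> A \<inter> seg l")
          case True
          hence "(a, r1 a) \<in> gr r2" using e unfolding gr_def by blast
          thus ?thesis unfolding gr_def by blast
        next
          case False
          thus ?thesis using r1 r2 unfolding R_def by auto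
        qed
      qed
    qed
    moreover have "gr ` R \<subseteq> Pow (seg l \<times> seg l)"
    proof
      fix X assume "X \<in> gr ` R"
      then obtain g where g: "g \<in> F" "X = gr (restrict g (A \<inter> seg l))" unfolding R_def by blast
      have "\<forall>a\<in>A. g a < a" using g FA prodA_lt by blast
      thus "X \<in> Pow (seg l \<times> seg l)" using g unfolding gr_def seg_def by force
    qed
    ultimately show ?thesis using card_of_ordLeq by blast
  qed
  with kR have "|seg \<kappa>| \<le>o |Pow (seg l \<times> seg l)|" by (rule ordLeq_transitive)
  thus ?thesis using lk2 lp by blast
qed

definition isF :: "'a set \<Rightarrow> 'a set set \<Rightarrow> 'a set set \<Rightarrow> bool" where
  "isF A T D \<longleftrightarrow> D \<subseteq> Pow A \<and> A \<in> D \<and> {} \<notin> D \<and> (\<forall>X\<in>D. \<forall>Y\<in>D. X \<inter> Y \<in> D)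
      \<and> (\<forall>X\<in>D. \<forall>Y. X \<subseteq> Y \<and> Y \<subseteq> A \<longrightarrow> Y \<in> D) \<and> T \<subseteq> D"

lemma isF_D:
  assumes "isF A T D"
  shows "D \<subseteq> Pow A" "A \<in> D" "{} \<notin> D" "X \<in> D \<Longrightarrow> Y \<in> D \<Longrightarrow> X \<inter> Y \<in> D"
    "X \<in> D \<Longrightarrow> X \<subseteq> Y \<Longrightarrow> Y \<subseteq> A \<Longrightarrow> Y \<in> D" "T \<subseteq> D"
  using assms unfolding isF_def by blast+

lemma isF_I:
  assumes "D \<subseteq> Pow A" "A \<in> D" "{} \<notin> D" "\<And>X Y. X \<in> D \<Longrightarrow> Y \<in> D \<Longrightarrow> X \<inter> Y \<in> D"
    "\<And>X Y. X \<in> D \<Longrightarrow> X \<subseteq> Y \<Longrightarrow> Y \<subseteq> A \<Longrightarrow> Y \<in> D" "T \<subseteq> D"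
  shows "isF A T D"
  using assms unfolding isF_def by blast

lemma uf_exists:
  fixes A :: "'a set" and T :: "'a set set"
  assumes Tne: "T \<noteq> {}" and Tsub: "\<forall>t\<in>T. t \<subseteq> A \<and> t \<noteq> {}"
    and Tdir: "\<forall>t1\<in>T. \<forall>t2\<in>T. \<exists>t3\<in>T. t3 \<subseteq> t1 \<inter> t2"
  shows "\<exists>D. ultrafilter_on D A \<and> T \<subseteq> D"
proof -
  define S where "S = {D. isF A T D}"
  define D0 where "D0 = {X. X \<subseteq> A \<and> (\<exists>t\<in>T. t \<subseteq> X)}"
  have D0: "isF A T D0"
  proof (rule isF_I)
    show "D0 \<subseteq> Pow A" unfolding D0_def by blast
    show "A \<in> D0" unfolding D0_def using Tne Tsub by blast
    show "{} \<notin> D0" unfolding D0_def using Tsub by blast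
    show "T \<subseteq> D0" unfolding D0_def using Tsub by blast
    show "Y \<in> D0" if "X \<in> D0" "X \<subseteq> Y" "Y \<subseteq> A" for X Y using that unfolding D0_def by blast
    show "X \<inter> Y \<in> D0" if X: "X \<in> D0" and Y: "Y \<in> D0" for X Y
    proof -
      obtain t1 t2 where tt: "t1 \<in> T" "t1 \<subseteq> X" "t2 \<in> T" "t2 \<subseteq> Y" "X \<subseteq> A"
        using X Y unfolding D0_def by blast
      obtain t3 where "t3 \<in> T" "t3 \<subseteq> t1 \<inter> t2" using Tdir tt(1,3) by blast
      hence "t3 \<subseteq> X \<inter> Y" using tt by blast
      moreover have "X \<inter> Y \<subseteq> A" using tt by blast
      ultimately show ?thesis unfolding D0_def using \<open>t3 \<in> T\<close> by blast
    qed
  qed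
  have "\<forall>C\<in>chains S. \<exists>U\<in>S. \<forall>X\<in>C. X \<subseteq> U"
  proof
    fix C assume C: "C \<in> chains S"
    show "\<exists>U\<in>S. \<forall>X\<in>C. X \<subseteq> U"
    proof (cases "C = {}")
      case True thus ?thesis using D0 unfolding S_def by blast
    next
      case False
      then obtain D1 where D1: "D1 \<in> C" by blast
      have CS: "isF A T D" if "D \<in> C" for D using chainsD2[OF C] that unfolding S_def by blast
      have "isF A T (\<Union>C)"
      proof (rule isF_I)
        show "\<Union>C \<subseteq> Pow A" using isF_D(1)[OF CS] by blast
        show "A \<in> \<Union>C" using isF_D(2)[OF CS[OF D1]] D1 by blast
        show "{} \<notin> \<Union>C" using isF_D(3)[OF CS] by blast
        show "T \<subseteq> \<Union>C" using isF_D(6)[OF CS[OF D1]] D1 by blast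
        show "Y \<in> \<Union>C" if xy: "X \<in> \<Union>C" "X \<subseteq> Y" "Y \<subseteq> A" for X Y
        proof -
          obtain D where "D \<in> C" "X \<in> D" using xy by blast
          hence "Y \<in> D" using isF_D(5)[OF CS[OF \<open>D \<in> C\<close>]] xy by blast
          thus "Y \<in> \<Union>C" using \<open>D \<in> C\<close> by blast
        qed
        show "X \<inter> Y \<in> \<Union>C" if xy: "X \<in> \<Union>C" "Y \<in> \<Union>C" for X Y
        proof -
          obtain Da Db where d: "Da \<in> C" "X \<in> Da" "Db \<in> C" "Y \<in> Db" using xy by blast
          from chainsD[OF C d(1) d(3)] show "X \<inter> Y \<in> \<Union>C"
          proof
            assume "Da \<subseteq> Db"
            hence "X \<inter> Y \<in> Db" using isF_D(4)[OF CS[OF d(3)]] d by blast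
            thus ?thesis using d by blast
          next
            assume "Db \<subseteq> Da"
            hence "X \<inter> Y \<in> Da" using isF_D(4)[OF CS[OF d(1)]] d by blast
            thus ?thesis using d by blast
          qed
        qed
      qed
      thus ?thesis unfolding S_def by blast
    qed
  qed
  from Zorn_Lemma2[OF this] obtain M where M: "M \<in> S" "\<forall>X\<in>S. M \<subseteq> X \<longrightarrow> X = M" by blast
  have FM: "isF A T M" using M unfolding S_def by blast
  note MD = isF_D[OF FM]
  have ultra: "X \<in> M \<or> A - X \<in> M" if XA: "X \<subseteq> A" for X
  proof (rule ccontr)
    assume nX: "\<not> (X \<in> M \<or> A - X \<in> M)"
    have ne: "m \<inter> X \<noteq> {}" if m: "m \<in> M" for m
    proof
      assume "m \<inter> X = {}"
      moreover have "m \<subseteq> A" using MD(1) m by blast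
      ultimately have "m \<subseteq> A - X" by blast
      hence "A - X \<in> M" using MD(5)[OF m] by blast
      thus False using nX by blast
    qed
    define M' where "M' = {Y. Y \<subseteq> A \<and> (\<exists>m\<in>M. m \<inter> X \<subseteq> Y)}"
    have "isF A T M'"
    proof (rule isF_I)
      show "M' \<subseteq> Pow A" unfolding M'_def by blast
      show "A \<in> M'" unfolding M'_def using MD(2) by blast
      show "{} \<notin> M'" unfolding M'_def using ne by blast
      show "T \<subseteq> M'" unfolding M'_def using MD(6) MD(1) by blast
      show "Y \<in> M'" if "Z \<in> M'" "Z \<subseteq> Y" "Y \<subseteq> A" for Z Y using that unfolding M'_def by blast
      show "Z \<inter> Y \<in> M'" if zy: "Z \<in> M'" "Y \<in> M'" for Z Y
      proof -
        obtain m1 m2 where m: "m1 \<in> M" "m1 \<inter> X \<subseteq> Z" "m2 \<in> M" "m2 \<inter> X \<subseteq> Y" "Z \<subseteq> A"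
          using zy unfolding M'_def by blast
        have "m1 \<inter> m2 \<in> M" using MD(4) m by blast
        moreover have "(m1 \<inter> m2) \<inter> X \<subseteq> Z \<inter> Y" using m by blast
        ultimately show "Z \<inter> Y \<in> M'" unfolding M'_def using m by blast
      qed
    qed
    moreover have "M \<subseteq> M'" unfolding M'_def using MD(1) by blast
    ultimately have "M' = M" using M unfolding S_def by blast
    moreover have "X \<in> M'" unfolding M'_def using XA MD(2) by blast
    ultimately show False using nX by blast
  qed
  have "ultrafilter_on M A" unfolding ultrafilter_on_def
  proof (intro conjI ballI allI impI)
    show "M \<subseteq> Pow A" "A \<in> M" "{} \<notin> M" by (rule MD)+
    show "X \<inter> Y \<in> M" if "X \<in> M" "Y \<in> M" for X Y using MD(4) that by blast
    show "Y \<in> M" if "X \<in> M" "X \<subseteq> Y \<and> Y \<subseteq> A" for X Y using MD(5) that by blast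
    show "X \<in> M \<or> A - X \<in> M" if "X \<subseteq> A" for X using ultra that by blast
  qed
  thus ?thesis using MD(6) by blast
qed

lemma no_small_cofinal:
  fixes l :: "'k::wellorder" and C :: "('k \<Rightarrow> 'k) set"
  assumes regA: "\<forall>a\<in>A. regular a" and uf: "ultrafilter_on D A"
    and tails: "\<forall>\<beta><l. {a\<in>A. \<beta> < a \<and> a < l} \<in> D"
    and E: "\<forall>\<beta><l. \<exists>e\<in>E. \<beta> < e \<and> e < l"
    and b0: "\<beta>0 < l"
    and Eb: "\<forall>a\<in>A. \<beta>0 < a \<and> a < l \<longrightarrow> (\<exists>y<a. \<forall>e\<in>E. e < a \<longrightarrow> e < y)"
    and cof: "cofinal_mod D A C"
  shows "\<not> |C| \<le>o |seg l|"
proof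
  assume le: "|C| \<le>o |seg l|"
  have CP: "C \<subseteq> prodA A" and cof2: "\<forall>f\<in>prodA A. \<exists>g\<in>C. {a\<in>A. f a < g a} \<in> D"
    using cof unfolding cofinal_mod_def by blast+
  have Cne: "C \<noteq> {}" using cof2 prodA_ne[OF regA] by blast
  obtain e where e: "e ` seg l = C" using iffD2[OF card_of_ordLeq2[OF Cne] le] by blast
  have eP: "e \<alpha> \<in> prodA A" if "\<alpha> < l" for \<alpha> using e CP that by (auto simp: seg_def)
  have "\<forall>a\<in>A. \<exists>y. \<beta>0 < a \<and> a < l \<longrightarrow> y < a \<and> (\<forall>e\<in>E. e < a \<longrightarrow> e < y)" using Eb by blast
  from bchoice[OF this] obtain yf where yf:
    "\<forall>a\<in>A. \<beta>0 < a \<and> a < l \<longrightarrow> yf a < a \<and> (\<forall>e\<in>E. e < a \<longrightarrow> e < yf a)" by blast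
  have "\<forall>a\<in>A. \<exists>t. \<beta>0 < a \<and> a < l \<longrightarrow> t < a \<and> (\<forall>\<alpha><yf a. e \<alpha> a < t)"
  proof
    fix a assume aA: "a \<in> A"
    show "\<exists>t. \<beta>0 < a \<and> a < l \<longrightarrow> t < a \<and> (\<forall>\<alpha><yf a. e \<alpha> a < t)"
    proof (cases "\<beta>0 < a \<and> a < l")
      case True
      have ya: "yf a < a" using yf aA True by blast
      define S where "S = (\<lambda>\<alpha>. e \<alpha> a) ` seg (yf a)"
      have Ssub: "S \<subseteq> seg a"
      proof
        fix s assume "s \<in> S"
        then obtain \<alpha> where \<alpha>: "\<alpha> < yf a" "s = e \<alpha> a" unfolding S_def seg_def by blast
        have "\<alpha> < l" using \<alpha>(1) ya True by (meson order.strict_trans)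
        thus "s \<in> seg a" using prodA_lt[OF eP aA] \<alpha>(2) by (simp add: seg_def)
      qed
      have "|S| \<le>o |seg (yf a)|" unfolding S_def by (rule card_of_image)
      also have "|seg (yf a)| <o |seg a|" using seg_less[OF regular_card ya] regA aA by blast
      finally have "|S| <o |seg a|" .
      then obtain t where "t < a" "\<forall>s\<in>S. s < t" using reg_bounded[OF _ Ssub] regA aA by blast
      thus ?thesis unfolding S_def seg_def by blast
    qed blast
  qed
  from bchoice[OF this] obtain tf where tf:
    "\<forall>a\<in>A. \<beta>0 < a \<and> a < l \<longrightarrow> tf a < a \<and> (\<forall>\<alpha><yf a. e \<alpha> a < tf a)" by blast
  define h where "h = restrict (\<lambda>a. if \<beta>0 < a \<and> a < l then tf a else z0) A"
  have hP: "h \<in> prodA A" unfolding h_def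
  proof (rule prodA_restrict, intro ballI)
    fix a assume aA: "a \<in> A"
    show "(if \<beta>0 < a \<and> a < l then tf a else z0) < a"
      using tf aA z0_less[OF regular_inf] regA by auto
  qed
  obtain g where g: "g \<in> C" "{a\<in>A. h a < g a} \<in> D" using cof2 hP by blast
  obtain \<alpha> where \<alpha>: "\<alpha> < l" "g = e \<alpha>" using e g(1) unfolding seg_def by blast
  have "max \<alpha> \<beta>0 < l" using \<alpha>(1) b0 by simp
  then obtain e0 where e0: "e0 \<in> E" "max \<alpha> \<beta>0 < e0" "e0 < l" using E by blast
  have T: "{a\<in>A. e0 < a \<and> a < l} \<in> D" using tails e0(3) by blast
  have "{a\<in>A. h a < g a} \<inter> {a\<in>A. e0 < a \<and> a < l} \<in> D" using uf g(2) T unfolding ultrafilter_on_def by blast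
  moreover have "{} \<notin> D" using uf unfolding ultrafilter_on_def by blast
  ultimately obtain a where a: "a \<in> A" "h a < g a" "e0 < a" "a < l" by (metis (no_types, lifting) Int_emptyI mem_Collect_eq)
  have b0a: "\<beta>0 < a" using e0(2) a(3) by (auto intro: order.strict_trans)
  have "e0 < yf a" using yf a(1,4) b0a e0(1) a(3) by blast
  hence "\<alpha> < yf a" using e0(2) by (auto intro: order.strict_trans)
  hence "e \<alpha> a < tf a" using tf a(1,4) b0a by blast
  moreover have "h a = tf a" unfolding h_def using a(1,4) b0a by simp
  ultimately show False using a(2) \<alpha>(2) by simp
qed

lemma exists_E:
  fixes l :: "'k::wellorder"
  assumes regA: "\<forall>a\<in>A. regular a" and nm: "\<not> mahlo l" and lp: "limit_point A l"
  shows "\<exists>E \<beta>0. \<beta>0 < l \<and> (\<forall>\<beta><l. \<exists>e\<in>E. \<beta> < e \<and> e < l) \<and>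
           (\<forall>a\<in>A. \<beta>0 < a \<and> a < l \<longrightarrow> (\<exists>y<a. \<forall>e\<in>E. e < a \<longrightarrow> e < y))"
proof -
  have lc: "limit_cardinal l" and li: "infinite_cardinal l" using lp_card[OF regA lp] by blast+
  show ?thesis
  proof (cases "regular l")
    case True
    define R where "R = {x. x < l \<and> regular x}"
    have "\<not> stationary R l" using nm True lc unfolding mahlo_def R_def by blast
    moreover have "R \<subseteq> seg l" unfolding R_def seg_def by blast
    ultimately obtain C where C: "club C l" "R \<inter> C = {}" unfolding stationary_def by blast
    have Cs: "C \<subseteq> seg l" and Cu: "\<forall>y<l. \<exists>c\<in>C. y < c" and Cc: "\<forall>d<l. limit_point C d \<longrightarrow> d \<in> C"
      using C(1) unfolding club_def by blast+
    have z: "z0 < l" by (rule z0_less[OF li])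
    have E1: "\<forall>\<beta><l. \<exists>e\<in>C. \<beta> < e \<and> e < l" using Cu Cs unfolding seg_def by blast
    have E2: "\<forall>a\<in>A. z0 < a \<and> a < l \<longrightarrow> (\<exists>y<a. \<forall>e\<in>C. e < a \<longrightarrow> e < y)"
    proof (intro ballI impI)
      fix a assume aA: "a \<in> A" and al: "z0 < a \<and> a < l"
      have ai: "infinite_cardinal a" using regA aA regular_inf by blast
      show "\<exists>y<a. \<forall>e\<in>C. e < a \<longrightarrow> e < y"
      proof (rule ccontr)
        assume "\<not> ?thesis"
        hence nb: "\<forall>y<a. \<exists>e\<in>C. e < a \<and> y \<le> e" by (meson leI order.strict_trans2 order.strict_trans1)
        have "limit_point C a" unfolding limit_point_def
        proof
          show "\<exists>c\<in>C. c < a" using nb al by blast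
          show "\<forall>y<a. \<exists>c\<in>C. y < c \<and> c < a"
          proof (intro allI impI)
            fix y assume "y < a"
            hence "sc y < a" "y < sc y" using sc_props[OF ai] by blast+
            then obtain c where "c \<in> C" "c < a" "sc y \<le> c" using nb by blast
            thus "\<exists>c\<in>C. y < c \<and> c < a" using \<open>y < sc y\<close> by (auto intro: order.strict_trans2)
          qed
        qed
        hence "a \<in> C" using Cc al by blast
        moreover have "a \<in> R" unfolding R_def using al regA aA by blast
        ultimately show False using C(2) by blast
      qed
    qed
    show ?thesis using z E1 E2 by blast
  next
    case False
    then obtain M where M: "unbounded_in M l" "\<not> |M| =o |seg l|"
      using li unfolding regular_def by blast
    have Ms: "M \<subseteq> seg l" and Mu: "\<forall>y<l. \<exists>s\<in>M. y \<le> s" using M(1) unfolding unbounded_in_def by blast+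
    have Mless: "|M| <o |seg l|"
      using card_of_mono1[OF Ms] M(2) ordLeq_iff_ordLess_or_ordIso[of "|M|" "|seg l|"] by blast
    have "\<exists>x<l. |M| \<le>o |seg x|"
    proof (rule ccontr)
      assume "\<not> ?thesis"
      hence sm: "|seg x| \<le>o |M|" if "x < l" for x
        using that not_ordLeq_iff_ordLess[OF card_of_Well_order card_of_Well_order] ordLess_imp_ordLeq by blast
      have cover: "seg l \<subseteq> M \<union> (\<Union>m\<in>M. seg m)"
      proof
        fix y assume "y \<in> seg l"
        then obtain s where "s \<in> M" "y \<le> s" using Mu unfolding seg_def by blast
        thus "y \<in> M \<union> (\<Union>m\<in>M. seg m)" unfolding seg_def by (cases "y = s") (auto simp: order.order_iff_strict)
      qed
      have "|seg l| \<le>o |M|"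
      proof (cases "finite M")
        case True
        have "finite (seg m)" if "m \<in> M" for m
          using card_of_ordLeq_finite[OF sm True] that Ms unfolding seg_def by blast
        hence "finite (M \<union> (\<Union>m\<in>M. seg m))" using True by blast
        hence "finite (seg l)" using cover finite_subset by blast
        hence False using li unfolding infinite_cardinal_def by blast
        thus ?thesis by blast
      next
        case False
        have "|\<Union>m\<in>M. seg m| \<le>o |M|"
        proof (rule card_of_UNION_ordLeq_infinite[OF False])
          show "|M| \<le>o |M|" by (rule ordLeq_refl[OF card_of_Card_order])
          show "\<forall>m\<in>M. |seg m| \<le>o |M|" using sm Ms unfolding seg_def by blast
        qed
        hence "|M \<union> (\<Union>m\<in>M. seg m)| \<le>o |M|"
          by (intro card_of_Un_ordLeq_infinite_Field)
             (auto simp: Field_card_of card_of_card_order_on ordLeq_refl card_of_Well_order False)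
        thus ?thesis using ordLeq_transitive[OF card_of_mono1[OF cover]] by blast
      qed
      thus False using Mless not_ordLess_ordLeq by blast
    qed
    then obtain x where x: "x < l" "|M| \<le>o |seg x|" by blast
    obtain a1 where a1: "a1 \<in> A" "x < a1" "a1 < l" using lp x(1) unfolding limit_point_def by blast
    have E1: "\<forall>\<beta><l. \<exists>e\<in>M. \<beta> < e \<and> e < l"
    proof (intro allI impI)
      fix \<beta> assume "\<beta> < l"
      hence "\<beta> < sc \<beta>" "sc \<beta> < l" using sc_props[OF li] by blast+
      then obtain s where "s \<in> M" "sc \<beta> \<le> s" using Mu by blast
      moreover hence "s < l" using Ms unfolding seg_def by blast
      ultimately show "\<exists>e\<in>M. \<beta> < e \<and> e < l" using \<open>\<beta> < sc \<beta>\<close> by (auto intro: order.strict_trans2)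
    qed
    have E2: "\<forall>a\<in>A. a1 < a \<and> a < l \<longrightarrow> (\<exists>y<a. \<forall>e\<in>M. e < a \<longrightarrow> e < y)"
    proof (intro ballI impI)
      fix a assume aA: "a \<in> A" and al: "a1 < a \<and> a < l"
      show "\<exists>y<a. \<forall>e\<in>M. e < a \<longrightarrow> e < y"
      proof (rule ccontr)
        assume "\<not> ?thesis"
        hence nb: "\<forall>y<a. \<exists>e\<in>M. e < a \<and> y \<le> e" by (meson leI order.strict_trans2 order.strict_trans1)
        have "unbounded_in (M \<inter> seg a) a" unfolding unbounded_in_def seg_def using nb by blast
        hence eq: "|M \<inter> seg a| =o |seg a|" using regA aA unfolding regular_def by blast
        have "|M \<inter> seg a| \<le>o |M|" by (rule card_of_mono1) blast
        also have "|M| \<le>o |seg x|" by (rule x(2))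
        also have "|seg x| \<le>o |seg a1|" using seg_mono[of x a1] a1(2) by simp
        also have "|seg a1| <o |seg a|" using seg_less[OF regular_card] regA aA al by blast
        finally show False using eq not_ordLess_ordIso by blast
      qed
    qed
    show ?thesis using a1(3) E1 E2 by blast
  qed
qed

lemma pcf_of_lim:
  fixes \<kappa> l :: "'k::wellorder"
  assumes regA: "\<forall>a\<in>A. regular a" and H1: "two_pow_is_succ l" and nm: "\<not> mahlo l"
    and regk: "regular \<kappa>" and lk: "l < \<kappa>" and lp: "limit_point A l"
    and kP: "|seg \<kappa>| \<le>o |Pow (seg l \<times> seg l)|"
  shows "\<kappa> \<in> pcf A"
proof -
  have lc: "limit_cardinal l" and li: "infinite_cardinal l" using lp_card[OF regA lp] by blast+
  have infl: "infinite (seg l)" using li unfolding infinite_cardinal_def by blast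
  have "|seg l \<times> seg l| =o |seg l|" by (rule card_of_Times_same_infinite[OF infl])
  then obtain f where "bij_betw f (seg l \<times> seg l) (seg l)" using card_of_ordIso by blast
  hence "bij_betw (image f) (Pow (seg l \<times> seg l)) (Pow (seg l))" by (rule bij_betw_Pow)
  hence P1: "|Pow (seg l \<times> seg l)| =o |Pow (seg l)|" using card_of_ordIso by blast
  have P2: "|Pow (seg l)| =o cardSuc |seg l|" using H1 unfolding two_pow_is_succ_def .
  have PC: "|Pow (seg l \<times> seg l)| =o cardSuc |seg l|" by (rule ordIso_transitive[OF P1 P2])
  have ks: "|seg l| <o |seg \<kappa>|" by (rule seg_less[OF regular_card[OF regk] lk])
  have cs: "cardSuc |seg l| \<le>o |seg \<kappa>|"
    using ks cardSuc_ordLess_ordLeq[OF card_of_Card_order card_of_Card_order] by blast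
  have kc1: "|seg \<kappa>| \<le>o cardSuc |seg l|" by (rule ordLeq_ordIso_trans[OF kP PC])
  have KC: "|seg \<kappa>| =o cardSuc |seg l|" using kc1 cs ordIso_iff_ordLeq by blast
  define T where "T = (\<lambda>\<beta>. {a\<in>A. \<beta> < a \<and> a < l}) ` seg l"
  have z: "z0 < l" by (rule z0_less[OF li])
  have Tne: "T \<noteq> {}" unfolding T_def seg_def using z by blast
  have Tsub: "\<forall>t\<in>T. t \<subseteq> A \<and> t \<noteq> {}"
  proof
    fix t assume "t \<in> T"
    then obtain \<beta> where b: "\<beta> < l" "t = {a\<in>A. \<beta> < a \<and> a < l}" unfolding T_def seg_def by blast
    obtain a where "a \<in> A" "\<beta> < a" "a < l" using lp b(1) unfolding limit_point_def by blast
    thus "t \<subseteq> A \<and> t \<noteq> {}" using b(2) by blast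
  qed
  have Tdir: "\<forall>t1\<in>T. \<forall>t2\<in>T. \<exists>t3\<in>T. t3 \<subseteq> t1 \<inter> t2"
  proof (intro ballI)
    fix t1 t2 assume "t1 \<in> T" "t2 \<in> T"
    then obtain b1 b2 where b: "b1 < l" "t1 = {a\<in>A. b1 < a \<and> a < l}" "b2 < l" "t2 = {a\<in>A. b2 < a \<and> a < l}"
      unfolding T_def seg_def by blast
    have "max b1 b2 < l" using b by simp
    hence "{a\<in>A. max b1 b2 < a \<and> a < l} \<in> T" unfolding T_def seg_def by blast
    moreover have "{a\<in>A. max b1 b2 < a \<and> a < l} \<subseteq> t1 \<inter> t2" using b by auto
    ultimately show "\<exists>t3\<in>T. t3 \<subseteq> t1 \<inter> t2" by blast
  qed
  obtain D where D: "ultrafilter_on D A" "T \<subseteq> D" using uf_exists[OF Tne Tsub Tdir] by blast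
  have tails: "\<forall>\<beta><l. {a\<in>A. \<beta> < a \<and> a < l} \<in> D" using D(2) unfolding T_def seg_def by blast
  have Dup: "\<And>X Y. X \<in> D \<Longrightarrow> X \<subseteq> Y \<Longrightarrow> Y \<subseteq> A \<Longrightarrow> Y \<in> D"
    using D(1) unfolding ultrafilter_on_def by blast
  obtain E \<beta>0 where EB: "\<beta>0 < l" "\<forall>\<beta><l. \<exists>e\<in>E. \<beta> < e \<and> e < l"
      "\<forall>a\<in>A. \<beta>0 < a \<and> a < l \<longrightarrow> (\<exists>y<a. \<forall>e\<in>E. e < a \<longrightarrow> e < y)"
    using exists_E[OF regA nm lp] by blast
  have lower: "|seg \<kappa>| \<le>o |C|" if cC: "cofinal_mod D A C" for C
  proof -
    have "\<not> |C| \<le>o |seg l|" by (rule no_small_cofinal[OF regA D(1) tails EB(2) EB(1) EB(3) cC])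
    hence "|seg l| <o |C|" using not_ordLeq_iff_ordLess[OF card_of_Well_order card_of_Well_order] by blast
    hence "cardSuc |seg l| \<le>o |C|" using cardSuc_ordLess_ordLeq[OF card_of_Card_order card_of_Card_order] by blast
    thus ?thesis by (rule ordIso_ordLeq_trans[OF KC])
  qed
  define C0 where "C0 = {g\<in>prodA A. \<forall>a\<in>A. \<not> a < l \<longrightarrow> g a = z0}"
  have C0cof: "cofinal_mod D A C0" unfolding cofinal_mod_def
  proof
    show "C0 \<subseteq> prodA A" unfolding C0_def by blast
    show "\<forall>f\<in>prodA A. \<exists>g\<in>C0. {a\<in>A. f a < g a} \<in> D"
    proof
      fix f assume fP: "f \<in> prodA A"
      define g where "g = restrict (\<lambda>a. if a < l then sc (f a) else z0) A"
      have gP: "g \<in> prodA A" unfolding g_def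
      proof (rule prodA_restrict, intro ballI)
        fix a assume aA: "a \<in> A"
        have ai: "infinite_cardinal a" using regA aA regular_inf by blast
        show "(if a < l then sc (f a) else z0) < a"
          using sc_props(2)[OF ai prodA_lt[OF fP aA]] z0_less[OF ai] by simp
      qed
      have gC: "g \<in> C0" unfolding C0_def using gP unfolding g_def by simp
      have sub: "{a\<in>A. z0 < a \<and> a < l} \<subseteq> {a\<in>A. f a < g a}"
      proof
        fix a assume a: "a \<in> {a\<in>A. z0 < a \<and> a < l}"
        have ai: "infinite_cardinal a" using regA a regular_inf by blast
        have "f a < sc (f a)" using sc_props(1)[OF ai prodA_lt[OF fP]] a by blast
        thus "a \<in> {a\<in>A. f a < g a}" using a unfolding g_def by simp
      qed
      have "{a\<in>A. f a < g a} \<in> D" using Dup[OF tails[rule_format, OF z] sub] by blast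
      thus "\<exists>g\<in>C0. {a\<in>A. f a < g a} \<in> D" using gC by blast
    qed
  qed
  have C0P: "|C0| \<le>o |Pow (seg l \<times> seg l)|"
  proof -
    define gr where "gr g = {(a, g a) | a. a \<in> A \<and> a < l}" for g :: "'k \<Rightarrow> 'k"
    have "inj_on gr C0"
    proof (rule inj_onI)
      fix g1 g2 assume g1: "g1 \<in> C0" and g2: "g2 \<in> C0" and e: "gr g1 = gr g2"
      show "g1 = g2"
      proof
        fix a
        show "g1 a = g2 a"
        proof (cases "a \<in> A")
          case True
          show ?thesis
          proof (cases "a < l")
            case True
            hence "(a, g1 a) \<in> gr g2" using e \<open>a \<in> A\<close> unfolding gr_def by blast
            thus ?thesis unfolding gr_def by blast
          next
            case False
            thus ?thesis using g1 g2 \<open>a \<in> A\<close> unfolding C0_def by auto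
          qed
        next
          case False
          thus ?thesis using g1 g2 unfolding C0_def prodA_def by (auto simp: PiE_def extensional_def)
        qed
      qed
    qed
    moreover have "gr ` C0 \<subseteq> Pow (seg l \<times> seg l)"
    proof
      fix X assume "X \<in> gr ` C0"
      then obtain g where g: "g \<in> C0" "X = gr g" by blast
      have "\<forall>a\<in>A. g a < a" using g prodA_lt unfolding C0_def by blast
      hence "\<forall>a\<in>A. a < l \<longrightarrow> g a < l" by (meson order.strict_trans)
      thus "X \<in> Pow (seg l \<times> seg l)" using g unfolding gr_def seg_def by blast
    qed
    ultimately show ?thesis using card_of_ordLeq by blast
  qed
  have "|C0| \<le>o |seg \<kappa>|"
    using ordLeq_ordIso_trans[OF ordLeq_ordIso_trans[OF C0P PC] ordIso_symmetric[OF KC]] .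
  hence C0k: "|C0| =o |seg \<kappa>|" using lower[OF C0cof] ordIso_iff_ordLeq by blast
  show ?thesis unfolding pcf_def
    using regular_card[OF regk] D(1) C0cof C0k lower by blast
qed

lemma pcf_principal:
  fixes \<kappa> :: "'k::wellorder"
  assumes regA: "\<forall>a\<in>A. regular a" and kA: "\<kappa> \<in> A"
  shows "\<kappa> \<in> pcf A"
proof -
  have regk: "regular \<kappa>" using regA kA by blast
  have ki: "infinite_cardinal \<kappa>" by (rule regular_inf[OF regk])
  define D where "D = {X. X \<subseteq> A \<and> \<kappa> \<in> X}"
  have uf: "ultrafilter_on D A" unfolding ultrafilter_on_def D_def using kA by blast
  define gg where "gg \<alpha> = restrict (\<lambda>a. if a = \<kappa> then \<alpha> else z0) A" for \<alpha> :: 'k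
  have ggP: "gg \<alpha> \<in> prodA A" if "\<alpha> < \<kappa>" for \<alpha> unfolding gg_def
  proof (rule prodA_restrict, intro ballI)
    fix a assume aA: "a \<in> A"
    show "(if a = \<kappa> then \<alpha> else z0) < a" using that z0_less[OF regular_inf] regA aA by auto
  qed
  have ggk: "gg \<alpha> \<kappa> = \<alpha>" for \<alpha> unfolding gg_def using kA by simp
  define C where "C = gg ` seg \<kappa>"
  have "inj_on gg (seg \<kappa>)" by (rule inj_onI) (metis ggk)
  hence "bij_betw gg (seg \<kappa>) C" unfolding C_def by (rule inj_on_imp_bij_betw)
  hence Ck: "|seg \<kappa>| =o |C|" using card_of_ordIso by blast
  have Ccof: "cofinal_mod D A C" unfolding cofinal_mod_def
  proof
    show "C \<subseteq> prodA A" unfolding C_def seg_def using ggP by blast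
    show "\<forall>f\<in>prodA A. \<exists>g\<in>C. {a\<in>A. f a < g a} \<in> D"
    proof
      fix f assume fP: "f \<in> prodA A"
      have fk: "f \<kappa> < \<kappa>" by (rule prodA_lt[OF fP kA])
      have "gg (sc (f \<kappa>)) \<in> C" unfolding C_def seg_def using sc_props(2)[OF ki fk] by blast
      moreover have "\<kappa> \<in> {a\<in>A. f a < gg (sc (f \<kappa>)) a}" using ggk sc_props(1)[OF ki fk] kA by simp
      ultimately show "\<exists>g\<in>C. {a\<in>A. f a < g a} \<in> D" unfolding D_def by blast
    qed
  qed
  have lower: "|seg \<kappa>| \<le>o |C'|" if cC: "cofinal_mod D A C'" for C'
  proof -
    have CP: "C' \<subseteq> prodA A" and cof2: "\<forall>f\<in>prodA A. \<exists>g\<in>C'. {a\<in>A. f a < g a} \<in> D"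
      using cC unfolding cofinal_mod_def by blast+
    define S where "S = (\<lambda>g. g \<kappa>) ` C'"
    have "unbounded_in S \<kappa>" unfolding unbounded_in_def
    proof
      show "S \<subseteq> seg \<kappa>" unfolding S_def seg_def using CP prodA_lt kA by blast
      show "\<forall>y<\<kappa>. \<exists>s\<in>S. y \<le> s"
      proof (intro allI impI)
        fix y assume "y < \<kappa>"
        then obtain g where "g \<in> C'" "{a\<in>A. gg y a < g a} \<in> D" using cof2 ggP by blast
        hence "y < g \<kappa>" using ggk unfolding D_def by auto
        thus "\<exists>s\<in>S. y \<le> s" unfolding S_def using \<open>g \<in> C'\<close> less_imp_le by blast
      qed
    qed
    hence "|S| =o |seg \<kappa>|" using regk unfolding regular_def by blast
    moreover have "|S| \<le>o |C'|" unfolding S_def by (rule card_of_image)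
    ultimately show ?thesis using ordIso_ordLeq_trans[OF ordIso_symmetric] by blast
  qed
  show ?thesis unfolding pcf_def
    using regular_card[OF regk] uf Ccof ordIso_symmetric[OF Ck] lower by blast
qed

lemma part1:
  fixes A :: "'k::wellorder set"
  assumes H1: "\<forall>\<mu>::'k. limit_cardinal \<mu> \<longrightarrow> two_pow_is_succ \<mu>" and H2: "\<forall>\<mu>::'k. \<not> mahlo \<mu>"
    and regA: "\<forall>a\<in>A. regular a"
  shows "spec A \<subseteq> pcf A \<union> lim_pts A"
proof
  fix \<kappa> assume "\<kappa> \<in> spec A"
  then obtain F where regk: "regular \<kappa>" and FA: "F \<subseteq> prodA A" and Fk: "|F| =o |seg \<kappa>|"
    and unb: "\<forall>G. G \<subseteq> F \<and> |G| =o |seg \<kappa>| \<longrightarrow> \<not> bounded_in_prod A G"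
    unfolding spec_def by blast
  show "\<kappa> \<in> pcf A \<union> lim_pts A"
  proof (cases "\<kappa> \<in> lim_pts A")
    case True thus ?thesis by blast
  next
    case nl: False
    show ?thesis
    proof (cases "\<kappa> \<in> A")
      case True thus ?thesis using pcf_principal[OF regA] by blast
    next
      case False
      have klim: "\<not> limit_point A \<kappa>" using nl unfolding lim_pts_def by blast
      obtain l where l: "l < \<kappa>" "limit_point A l" "|seg \<kappa>| \<le>o |Pow (seg l \<times> seg l)|"
        using extract_lim[OF regA regk False klim FA Fk unb] by blast
      have "limit_cardinal l" using lp_card[OF regA l(2)] by blast
      hence "two_pow_is_succ l" using H1 by blast
      hence "\<kappa> \<in> pcf A" using pcf_of_lim[OF regA _ _ regk l(1) l(2) l(3)] H2 by blast
      thus ?thesis by blast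
    qed
  qed
qed

lemma pcf_sub_spec:
  fixes A :: "'k::wellorder set"
  assumes regA: "\<forall>a\<in>A. regular a"
  shows "pcf A \<subseteq> spec A"
proof
  fix \<kappa> assume "\<kappa> \<in> pcf A"
  then obtain D C where kc: "is_cardinal \<kappa>" and uf: "ultrafilter_on D A" and Ccof: "cofinal_mod D A C"
    and Ck: "|C| =o |seg \<kappa>|" and minC: "\<forall>C'. cofinal_mod D A C' \<longrightarrow> |seg \<kappa>| \<le>o |C'|"
    unfolding pcf_def by blast
  have emp: "{} \<notin> D" and Dint: "\<And>X Y. X \<in> D \<Longrightarrow> Y \<in> D \<Longrightarrow> X \<inter> Y \<in> D"
    and Dup: "\<And>X Y. X \<in> D \<Longrightarrow> X \<subseteq> Y \<Longrightarrow> Y \<subseteq> A \<Longrightarrow> Y \<in> D"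
    and Dult: "\<And>X. X \<subseteq> A \<Longrightarrow> X \<in> D \<or> A - X \<in> D"
    using uf unfolding ultrafilter_on_def by blast+
  have CP: "C \<subseteq> prodA A" and cof2: "\<forall>f\<in>prodA A. \<exists>g\<in>C. {a\<in>A. f a < g a} \<in> D"
    using Ccof unfolding cofinal_mod_def by blast+
  obtain e where e: "bij_betw e (seg \<kappa>) C" using ordIso_symmetric[OF Ck] card_of_ordIso by blast
  have eP: "e \<alpha> \<in> prodA A" if "\<alpha> < \<kappa>" for \<alpha> using e CP that unfolding bij_betw_def seg_def by blast
  have notcof: "\<not> cofinal_mod D A X" if "|X| <o |seg \<kappa>|" for X
    using not_ordLess_ordLeq[OF that] minC by blast
  have "\<forall>\<alpha>\<in>seg \<kappa>. \<exists>u. u \<in> prodA A \<and> (\<forall>\<beta><\<alpha>. {a\<in>A. e \<beta> a \<le> u a} \<in> D)"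
  proof
    fix \<alpha> assume "\<alpha> \<in> seg \<kappa>"
    hence ak: "\<alpha> < \<kappa>" unfolding seg_def by blast
    have XP: "e ` seg \<alpha> \<subseteq> prodA A"
    proof
      fix x assume "x \<in> e ` seg \<alpha>"
      then obtain \<beta> where b: "\<beta> < \<alpha>" "x = e \<beta>" unfolding seg_def by blast
      have "\<beta> < \<kappa>" using b(1) ak by (rule order.strict_trans)
      with b show "x \<in> prodA A" using eP by blast
    qed
    have "|e ` seg \<alpha>| \<le>o |seg \<alpha>|" by (rule card_of_image)
    also have "|seg \<alpha>| <o |seg \<kappa>|" by (rule seg_less[OF kc ak])
    finally have "\<not> cofinal_mod D A (e ` seg \<alpha>)" by (rule notcof)
    then obtain u where u: "u \<in> prodA A" "\<forall>g\<in>e ` seg \<alpha>. {a\<in>A. u a < g a} \<notin> D"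
      using XP unfolding cofinal_mod_def by blast
    have "\<forall>\<beta><\<alpha>. {a\<in>A. e \<beta> a \<le> u a} \<in> D"
    proof (intro allI impI)
      fix \<beta> assume "\<beta> < \<alpha>"
      hence "{a\<in>A. u a < e \<beta> a} \<notin> D" using u(2) unfolding seg_def by blast
      hence "A - {a\<in>A. u a < e \<beta> a} \<in> D" using Dult[of "{a\<in>A. u a < e \<beta> a}"] by blast
      moreover have "A - {a\<in>A. u a < e \<beta> a} = {a\<in>A. e \<beta> a \<le> u a}" by (auto simp: not_less)
      ultimately show "{a\<in>A. e \<beta> a \<le> u a} \<in> D" by metis
    qed
    thus "\<exists>u. u \<in> prodA A \<and> (\<forall>\<beta><\<alpha>. {a\<in>A. e \<beta> a \<le> u a} \<in> D)" using u(1) by blast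
  qed
  from bchoice[OF this] obtain u where u: "\<forall>\<alpha>\<in>seg \<kappa>. u \<alpha> \<in> prodA A \<and> (\<forall>\<beta><\<alpha>. {a\<in>A. e \<beta> a \<le> u \<alpha> a} \<in> D)"
    by blast
  define f where "f \<alpha> = restrict (\<lambda>a. max (u \<alpha> a) (e \<alpha> a)) A" for \<alpha>
  have fP: "f \<alpha> \<in> prodA A" if ak: "\<alpha> < \<kappa>" for \<alpha> unfolding f_def
  proof (rule prodA_restrict, intro ballI)
    fix a assume aA: "a \<in> A"
    have "u \<alpha> \<in> prodA A" using u ak unfolding seg_def by blast
    hence "u \<alpha> a < a" using aA by (rule prodA_lt)
    moreover have "e \<alpha> a < a" using eP[OF ak] aA prodA_lt by blast
    ultimately show "max (u \<alpha> a) (e \<alpha> a) < a" by simp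
  qed
  have fge: "{a\<in>A. e \<beta> a \<le> f \<alpha> a} \<in> D" if ba: "\<beta> \<le> \<alpha>" and ak: "\<alpha> < \<kappa>" for \<alpha> \<beta>
  proof (cases "\<beta> = \<alpha>")
    case True
    have "{a\<in>A. e \<beta> a \<le> f \<alpha> a} = A" unfolding f_def using True by auto
    moreover have "A \<in> D" using uf unfolding ultrafilter_on_def by blast
    ultimately show ?thesis by simp
  next
    case False
    hence "\<beta> < \<alpha>" using ba by simp
    hence "{a\<in>A. e \<beta> a \<le> u \<alpha> a} \<in> D" using u ak unfolding seg_def by blast
    moreover have "{a\<in>A. e \<beta> a \<le> u \<alpha> a} \<subseteq> {a\<in>A. e \<beta> a \<le> f \<alpha> a}" unfolding f_def by (auto intro: max.coboundedI1)
    ultimately show ?thesis using Dup by blast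
  qed
  have K: "\<forall>h\<in>prodA A. \<exists>s\<in>S. {a\<in>A. h a < f s a} \<in> D"
    if Ss: "S \<subseteq> seg \<kappa>" and Su: "\<forall>y<\<kappa>. \<exists>s\<in>S. y \<le> s" for S
  proof
    fix h assume hP: "h \<in> prodA A"
    obtain g where g: "g \<in> C" "{a\<in>A. h a < g a} \<in> D" using cof2 hP by blast
    obtain \<gamma> where \<gamma>: "\<gamma> < \<kappa>" "g = e \<gamma>" using e g(1) unfolding bij_betw_def seg_def by blast
    obtain s where s: "s \<in> S" "\<gamma> \<le> s" using Su \<gamma>(1) by blast
    have sk: "s < \<kappa>" using s Ss unfolding seg_def by blast
    have "{a\<in>A. h a < g a} \<inter> {a\<in>A. e \<gamma> a \<le> f s a} \<in> D" using Dint[OF g(2) fge[OF s(2) sk]] .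
    moreover have "{a\<in>A. h a < g a} \<inter> {a\<in>A. e \<gamma> a \<le> f s a} \<subseteq> {a\<in>A. h a < f s a}"
      using \<gamma>(2) by (auto intro: order.strict_trans2)
    ultimately have "{a\<in>A. h a < f s a} \<in> D" using Dup by blast
    thus "\<exists>s\<in>S. {a\<in>A. h a < f s a} \<in> D" using s(1) by blast
  qed
  have fS: "f ` S \<subseteq> prodA A" if "S \<subseteq> seg \<kappa>" for S using fP that unfolding seg_def by blast
  have Kc: "cofinal_mod D A (f ` S)" if Ss: "S \<subseteq> seg \<kappa>" and Su: "\<forall>y<\<kappa>. \<exists>s\<in>S. y \<le> s" for S
    unfolding cofinal_mod_def using fS[OF Ss] K[OF Ss Su] by blast
  have Kk: "|seg \<kappa>| \<le>o |S|" if Ss: "S \<subseteq> seg \<kappa>" and Su: "\<forall>y<\<kappa>. \<exists>s\<in>S. y \<le> s" for S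
    using ordLeq_transitive[OF minC[rule_format, OF Kc[OF Ss Su]] card_of_image] .
  have Cne: "C \<noteq> {}" using cof2 prodA_ne[OF regA] by blast
  have kne: "seg \<kappa> \<noteq> {}" using e Cne unfolding bij_betw_def by blast
  have infk: "infinite (seg \<kappa>)"
  proof
    assume fin: "finite (seg \<kappa>)"
    define m where "m = Max (seg \<kappa>)"
    have m: "m \<in> seg \<kappa>" unfolding m_def using Max_in[OF fin kne] .
    have mk: "m < \<kappa>" using m unfolding seg_def by blast
    have "\<forall>y<\<kappa>. \<exists>s\<in>{m}. y \<le> s" using Max_ge[OF fin] unfolding m_def seg_def by blast
    hence Km: "\<forall>h\<in>prodA A. {a\<in>A. h a < f m a} \<in> D" using K[of "{m}"] m by blast
    define h where "h = restrict (\<lambda>a. sc (f m a)) A"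
    have hP: "h \<in> prodA A" unfolding h_def
    proof (rule prodA_restrict, intro ballI)
      fix a assume aA: "a \<in> A"
      show "sc (f m a) < a" using sc_props(2)[OF regular_inf prodA_lt[OF fP[OF mk] aA]] regA aA by blast
    qed
    have "{a\<in>A. h a < f m a} = {}"
    proof -
      have "f m a < h a" if aA: "a \<in> A" for a
        using sc_props(1)[OF regular_inf prodA_lt[OF fP[OF mk] aA]] regA aA unfolding h_def by simp
      thus ?thesis by (auto dest: order.asym)
    qed
    thus False using Km hP emp by metis
  qed
  have regk: "regular \<kappa>" unfolding regular_def
  proof (intro conjI allI impI)
    show "infinite_cardinal \<kappa>" unfolding infinite_cardinal_def using kc infk by blast
    fix S assume "unbounded_in S \<kappa>"
    hence Ss: "S \<subseteq> seg \<kappa>" and Su: "\<forall>y<\<kappa>. \<exists>s\<in>S. y \<le> s" unfolding unbounded_in_def by blast+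
    show "|S| =o |seg \<kappa>|" using Kk[OF Ss Su] card_of_mono1[OF Ss] ordIso_iff_ordLeq by blast
  qed
  define F where "F = f ` seg \<kappa>"
  have FP: "F \<subseteq> prodA A" unfolding F_def by (rule fS) simp
  have Fk: "|F| =o |seg \<kappa>|"
  proof -
    have "|seg \<kappa>| \<le>o |F|" unfolding F_def
      by (rule minC[rule_format, OF Kc]) (auto simp: seg_def)
    moreover have "|F| \<le>o |seg \<kappa>|" unfolding F_def by (rule card_of_image)
    ultimately show ?thesis using ordIso_iff_ordLeq by blast
  qed
  have unb: "\<not> bounded_in_prod A G" if G: "G \<subseteq> F" "|G| =o |seg \<kappa>|" for G
  proof
    assume "bounded_in_prod A G"
    then obtain h where h: "h \<in> prodA A" "\<forall>g\<in>G. \<forall>a\<in>A. g a < h a" unfolding bounded_in_prod_def by blast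
    define S where "S = {\<alpha>\<in>seg \<kappa>. f \<alpha> \<in> G}"
    have GS: "G = f ` S" unfolding S_def using G(1) unfolding F_def by blast
    have Ss: "S \<subseteq> seg \<kappa>" unfolding S_def by blast
    have kS: "|seg \<kappa>| \<le>o |S|"
      using ordIso_ordLeq_trans[OF ordIso_symmetric[OF G(2)]] card_of_image[of f S] GS by simp
    have Su: "\<forall>y<\<kappa>. \<exists>s\<in>S. y \<le> s"
    proof (rule ccontr)
      assume "\<not> ?thesis"
      then obtain y where y: "y < \<kappa>" "\<forall>s\<in>S. \<not> y \<le> s" by blast
      hence "S \<subseteq> seg y" using Ss unfolding seg_def by (auto simp: not_le)
      hence "|S| \<le>o |seg y|" by (rule card_of_mono1)
      also have "|seg y| <o |seg \<kappa>|" by (rule seg_less[OF kc y(1)])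
      finally show False using kS not_ordLess_ordLeq by blast
    qed
    obtain s where s: "s \<in> S" "{a\<in>A. h a < f s a} \<in> D" using K[OF Ss Su] h(1) by blast
    have "f s \<in> G" using s(1) unfolding S_def by blast
    hence eqE: "{a\<in>A. h a < f s a} = {}" using h(2) by (auto dest: order.asym)
    have "{} \<in> D" using s(2) unfolding eqE .
    thus False using emp by blast
  qed
  show "\<kappa> \<in> spec A" unfolding spec_def using regk FP Fk unb by blast
qed

theorem theorem3p5:
  fixes dummy :: "'k::wellorder"
  shows "((\<forall>\<mu>::'k. limit_cardinal \<mu> \<longrightarrow> two_pow_is_succ \<mu>) \<and> (\<forall>\<mu>::'k. \<not> mahlo \<mu>) \<longrightarrow>
           (\<forall>A::'k set. (\<forall>a\<in>A. regular a) \<longrightarrow> spec A \<subseteq> pcf A \<union> lim_pts A))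
       \<and> ((\<forall>\<mu>::'k. singular \<mu> \<longrightarrow> two_pow_is_succ \<mu>) \<and>
           (\<forall>\<mu>::'k. \<not> (regular \<mu> \<and> limit_cardinal \<mu>)) \<longrightarrow>
           (\<forall>A::'k set. (\<forall>a\<in>A. regular a) \<longrightarrow> spec A = pcf A))"
proof (intro conjI impI allI)
  fix A :: "'k set"
  assume H: "(\<forall>\<mu>::'k. limit_cardinal \<mu> \<longrightarrow> two_pow_is_succ \<mu>) \<and> (\<forall>\<mu>::'k. \<not> mahlo \<mu>)"
    and regA: "\<forall>a\<in>A. regular a"
  show "spec A \<subseteq> pcf A \<union> lim_pts A" using part1[OF _ _ regA] H by blast
next
  fix A :: "'k set"
  assume H: "(\<forall>\<mu>::'k. singular \<mu> \<longrightarrow> two_pow_is_succ \<mu>) \<and> (\<forall>\<mu>::'k. \<not> (regular \<mu> \<and> limit_cardinal \<mu>))"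
    and regA: "\<forall>a\<in>A. regular a"
  have H1: "\<forall>\<mu>::'k. limit_cardinal \<mu> \<longrightarrow> two_pow_is_succ \<mu>"
  proof (intro allI impI)
    fix \<mu> :: 'k assume lc: "limit_cardinal \<mu>"
    hence "infinite_cardinal \<mu>" unfolding limit_cardinal_def by blast
    moreover have "\<not> regular \<mu>" using H lc by blast
    ultimately have "singular \<mu>" unfolding singular_def by blast
    thus "two_pow_is_succ \<mu>" using H by blast
  qed
  have H2: "\<forall>\<mu>::'k. \<not> mahlo \<mu>" using H unfolding mahlo_def by blast
  have s1: "spec A \<subseteq> pcf A \<union> lim_pts A" by (rule part1[OF H1 H2 regA])
  have s2: "spec A \<inter> lim_pts A = {}"
  proof (rule ccontr)
    assume "spec A \<inter> lim_pts A \<noteq> {}"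
    then obtain \<kappa> where k: "\<kappa> \<in> spec A" "\<kappa> \<in> lim_pts A" by blast
    have "regular \<kappa>" using k(1) unfolding spec_def by blast
    moreover have "limit_cardinal \<kappa>" using lp_card(1)[OF regA] k(2) unfolding lim_pts_def by blast
    ultimately show False using H by blast
  qed
  have "spec A \<subseteq> pcf A" using s1 s2 by blast
  moreover have "pcf A \<subseteq> spec A" by (rule pcf_sub_spec[OF regA])
  ultimately show "spec A = pcf A" by blast
qed

end
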